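(* If $X$ is a strongly $\delta$-hyperbolic directed graph, then every strongly connected component of $X$ (viewed as a directed graph with the induced edges) is strongly $\delta$-hyperbolic.
   Context: Directed graphs may have loops and multiple edges; $d(u,v)$ is the length of a shortest directed path from $u$ to $v$ ($\infty$ if none). Strongly connected components are the equivalence classes of $x\sim y$ iff $d(x,y)<\infty$ and $d(y,x)<\infty$. Out-ball $\overrightarrow{\mathcal{B}}_r(x)=\{y : d(x,y)\le r\}$, in-ball $\overleftarrow{\mathcal{B}}_r(x)=\{y : d(y,x)\le r\}$, extended to sets by union. A path $[x_0,\dots,x_n]$ is a geodesic if $n=d(x_0,x_n)$. A directed geodesic triangle is an ordered triple $(p,q,r)$ of geodesics with the end of $p$ equal to the start of $q$ and $p\circ q$ having the same start and end as $r$; it is $\delta$-thin if every vertex of $r$ lies in $\overrightarrow{\mathcal{B}}_\delta(p)\cup\overleftarrow{\mathcal{B}}_\delta(q)$, every vertex of $p$ lies in $\overrightarrow{\mathcal{B}}_\delta(r)\cup\overleftarrow{\mathcal{B}}_\delta(q)$, and every vertex of $q$ lies in $\overrightarrow{\mathcal{B}}_\delta(p)\cup\overleftarrow{\mathcal{B}}_\delta(r)$. A directed graph is strongly $\delta$-hyperbolic if all its directed geodesic triangles are $\delta$-thin. *)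

theory Defs
  imports "Graph_Theory.Digraph" "Graph_Theory.Digraph_Component" "HOL-Library.Extended_Nat"
begin

text \<open>Directed graphs (loops and multiple arcs allowed) are Graph_Theory pre_digraphs
  satisfying wf_digraph.\<close>

definition dpath :: "('a,'b) pre_digraph \<Rightarrow> 'a list \<Rightarrow> bool" where
  "dpath G xs \<longleftrightarrow> xs \<noteq> [] \<and> set xs \<subseteq> verts G \<and>
     (\<forall>i. Suc i < length xs \<longrightarrow> (xs ! i, xs ! Suc i) \<in> arcs_ends G)"

definition ddist :: "('a,'b) pre_digraph \<Rightarrow> 'a \<Rightarrow> 'a \<Rightarrow> enat" where
  "ddist G u v = (INF xs \<in> {xs. dpath G xs \<and> hd xs = u \<and> last xs = v}. enat (length xs - 1))"

definition dgeodesic :: "('a,'b) pre_digraph \<Rightarrow> 'a list \<Rightarrow> bool" where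
  "dgeodesic G xs \<longleftrightarrow> dpath G xs \<and> enat (length xs - 1) = ddist G (hd xs) (last xs)"

definition out_ball :: "('a,'b) pre_digraph \<Rightarrow> real \<Rightarrow> 'a set \<Rightarrow> 'a set" where
  "out_ball G r S = {y \<in> verts G. \<exists>x\<in>S. \<exists>n::nat. ddist G x y = enat n \<and> real n \<le> r}"

definition in_ball :: "('a,'b) pre_digraph \<Rightarrow> real \<Rightarrow> 'a set \<Rightarrow> 'a set" where
  "in_ball G r S = {y \<in> verts G. \<exists>x\<in>S. \<exists>n::nat. ddist G y x = enat n \<and> real n \<le> r}"

definition geodesic_triangle :: "('a,'b) pre_digraph \<Rightarrow> 'a list \<Rightarrow> 'a list \<Rightarrow> 'a list \<Rightarrow> bool" where
  "geodesic_triangle G p q r \<longleftrightarrow> dgeodesic G p \<and> dgeodesic G q \<and> dgeodesic G r \<and>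
     last p = hd q \<and> hd r = hd p \<and> last r = last q"

definition thin_triangle :: "('a,'b) pre_digraph \<Rightarrow> real \<Rightarrow> 'a list \<Rightarrow> 'a list \<Rightarrow> 'a list \<Rightarrow> bool" where
  "thin_triangle G \<delta> p q r \<longleftrightarrow>
     set r \<subseteq> out_ball G \<delta> (set p) \<union> in_ball G \<delta> (set q) \<and>
     set p \<subseteq> out_ball G \<delta> (set r) \<union> in_ball G \<delta> (set q) \<and>
     set q \<subseteq> out_ball G \<delta> (set p) \<union> in_ball G \<delta> (set r)"

definition strongly_hyperbolic :: "('a,'b) pre_digraph \<Rightarrow> real \<Rightarrow> bool" where
  "strongly_hyperbolic G \<delta> \<longleftrightarrow>
     (\<forall>p q r. geodesic_triangle G p q r \<longrightarrow> thin_triangle G \<delta> p q r)"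

definition scc_classes :: "('a,'b) pre_digraph \<Rightarrow> 'a set set" where
  "scc_classes G = (\<lambda>x. {y \<in> verts G. ddist G x y < \<infinity> \<and> ddist G y x < \<infinity>}) ` verts G"

end

theory Submission
  imports Defs
begin

lemma dpath_single: "dpath G [x] \<longleftrightarrow> x \<in> verts G"
  by (auto simp: dpath_def)

lemma dpath_Cons2: "dpath G (x#y#ys) \<longleftrightarrow> x \<in> verts G \<and> (x,y) \<in> arcs_ends G \<and> dpath G (y#ys)"
  unfolding dpath_def
  apply (auto simp: less_Suc_eq_0_disj)
  done

lemma dpath_rtrancl:
  assumes "dpath G xs" "z \<in> set xs"
  shows "(hd xs, z) \<in> (arcs_ends G)\<^sup>* \<and> (z, last xs) \<in> (arcs_ends G)\<^sup>*"
  using assms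
proof (induction xs arbitrary: z)
  case Nil then show ?case by simp
next
  case (Cons x xs)
  show ?case
  proof (cases xs)
    case Nil with Cons show ?thesis by simp
  next
    case (Cons y ys)
    with Cons.prems have a: "(x,y) \<in> arcs_ends G" and p: "dpath G xs"
      by (auto simp: dpath_Cons2)
    have l: "(y, last xs) \<in> (arcs_ends G)\<^sup>*"
      using Cons.IH[OF p, of y] Cons by simp
    show ?thesis
    proof (cases "z = x")
      case True then show ?thesis using a l Cons by auto
    next
      case False
      then have "z \<in> set xs" using Cons.prems by simp
      from Cons.IH[OF p this] a Cons show ?thesis
        by (auto intro: converse_rtrancl_into_rtrancl)
    qed
  qed
qed

lemma rtrancl_dpath:
  assumes "wf_digraph G" "(a,b) \<in> (arcs_ends G)\<^sup>*" "b \<in> verts G"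
  shows "\<exists>xs. dpath G xs \<and> hd xs = a \<and> last xs = b"
  using assms(2,3)
proof (induction rule: converse_rtrancl_induct)
  case base then show ?case by (intro exI[of _ "[b]"]) (simp add: dpath_single)
next
  case (step a a')
  then obtain xs where xs: "dpath G xs" "hd xs = a'" "last xs = b" by auto
  then obtain ys where ys: "xs = a' # ys" by (cases xs) (auto simp: dpath_def)
  have "a \<in> verts G" using wf_digraph.adj_in_verts[OF assms(1)] step(1) by auto
  then have "dpath G (a # xs)" using xs ys step(1)
    by (cases ys) (auto simp: dpath_Cons2)
  then show ?case using xs ys by (intro exI[of _ "a#xs"]) auto
qed

lemma ddist_fin_iff:
  "ddist G a b < \<infinity> \<longleftrightarrow> (\<exists>xs. dpath G xs \<and> hd xs = a \<and> last xs = b)"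
proof
  assume "ddist G a b < \<infinity>"
  then show "\<exists>xs. dpath G xs \<and> hd xs = a \<and> last xs = b"
    unfolding ddist_def by (cases "{xs. dpath G xs \<and> hd xs = a \<and> last xs = b} = {}") (auto simp: top_enat_def)
next
  assume "\<exists>xs. dpath G xs \<and> hd xs = a \<and> last xs = b"
  then obtain xs where "dpath G xs \<and> hd xs = a \<and> last xs = b" by auto
  then have "ddist G a b \<le> enat (length xs - 1)" unfolding ddist_def
    by (intro INF_lower2[of xs]) auto
  then show "ddist G a b < \<infinity>" using le_less_trans by fastforce
qed

lemma ddist_fin_iff2:
  assumes "wf_digraph G"
  shows "ddist G a b < \<infinity> \<longleftrightarrow> a \<in> verts G \<and> b \<in> verts G \<and> (a,b) \<in> (arcs_ends G)\<^sup>*"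
  unfolding ddist_fin_iff
proof
  assume "\<exists>xs. dpath G xs \<and> hd xs = a \<and> last xs = b"
  then obtain xs where xs: "dpath G xs" "hd xs = a" "last xs = b" by auto
  then have "a \<in> set xs" "b \<in> set xs" by (auto simp: dpath_def)
  then show "a \<in> verts G \<and> b \<in> verts G \<and> (a,b) \<in> (arcs_ends G)\<^sup>*"
    using dpath_rtrancl[OF xs(1), of b] xs by (auto simp: dpath_def)
qed (use rtrancl_dpath[OF assms] in auto)


lemma arcs_ends_induce: "arcs_ends (induce_subgraph G C) = {(u,v) \<in> arcs_ends G. u \<in> C \<and> v \<in> C}"
  by (auto simp: arcs_ends_def arc_to_ends_def)

lemma dpath_induce:
  assumes "C \<subseteq> verts G"
  shows "dpath (induce_subgraph G C) xs \<longleftrightarrow> dpath G xs \<and> set xs \<subseteq> C"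
proof -
  have "xs ! i \<in> set xs" if "Suc i < length xs" for i using that by simp
  then show ?thesis
  using assms unfolding dpath_def arcs_ends_induce
  by (auto simp: subset_iff)
qed

theorem proposition2p5:
  fixes G :: "('a,'b) pre_digraph" and \<delta> :: real
  assumes "wf_digraph G"
    and "strongly_hyperbolic G \<delta>"
    and "C \<in> scc_classes G"
  shows "strongly_hyperbolic (induce_subgraph G C) \<delta>"
proof -
  let ?H = "induce_subgraph G C"
  let ?R = "(arcs_ends G)\<^sup>*"
  from assms(3) obtain x0 where x0: "x0 \<in> verts G"
    and Cdef: "C = {y \<in> verts G. ddist G x0 y < \<infinity> \<and> ddist G y x0 < \<infinity>}"
    unfolding scc_classes_def by auto
  have Cmem: "z \<in> C \<longleftrightarrow> z \<in> verts G \<and> (x0,z) \<in> ?R \<and> (z,x0) \<in> ?R" for z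
    using Cdef x0 ddist_fin_iff2[OF assms(1)] by auto
  have Cv: "C \<subseteq> verts G" using Cdef by auto
  have closed: "set xs \<subseteq> C" if "dpath G xs" "hd xs \<in> C" "last xs \<in> C" for xs
  proof
    fix z assume z: "z \<in> set xs"
    then have zv: "z \<in> verts G" using that(1) by (auto simp: dpath_def)
    from dpath_rtrancl[OF that(1) z] that(2,3) show "z \<in> C"
      unfolding Cmem using zv by (meson rtrancl_trans)
  qed
  have dpH: "dpath ?H xs \<longleftrightarrow> dpath G xs \<and> set xs \<subseteq> C" for xs
    using dpath_induce[OF Cv] .
  have dd: "ddist ?H a b = ddist G a b" if "a \<in> C" "b \<in> C" for a b
  proof -
    have "{xs. dpath ?H xs \<and> hd xs = a \<and> last xs = b} = {xs. dpath G xs \<and> hd xs = a \<and> last xs = b}"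
      using closed that unfolding dpH by auto
    then show ?thesis unfolding ddist_def by simp
  qed
  have hdl: "hd xs \<in> set xs" "last xs \<in> set xs" if "dpath G xs" for xs
    using that by (auto simp: dpath_def)
  have geoH: "dgeodesic ?H xs \<longleftrightarrow> dgeodesic G xs \<and> set xs \<subseteq> C" for xs
  proof
    assume a: "dgeodesic ?H xs"
    then have "dpath G xs" "set xs \<subseteq> C" using dpH by (auto simp: dgeodesic_def)
    then show "dgeodesic G xs \<and> set xs \<subseteq> C"
      using a dd[of "hd xs" "last xs"] hdl[of xs] by (auto simp: dgeodesic_def dpH)
  next
    assume a: "dgeodesic G xs \<and> set xs \<subseteq> C"
    then have "dpath G xs" by (auto simp: dgeodesic_def)
    moreover have "hd xs \<in> C" "last xs \<in> C" using a hdl[OF \<open>dpath G xs\<close>] by auto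
    ultimately show "dgeodesic ?H xs"
      using a dd[of "hd xs" "last xs"] by (auto simp: dgeodesic_def dpH)
  qed
  have ob: "out_ball G \<delta> S \<inter> C \<subseteq> out_ball ?H \<delta> S" if "S \<subseteq> C" for S
    using that dd unfolding out_ball_def by fastforce
  have ib: "in_ball G \<delta> S \<inter> C \<subseteq> in_ball ?H \<delta> S" if "S \<subseteq> C" for S
    using that dd unfolding in_ball_def by fastforce
  show ?thesis unfolding strongly_hyperbolic_def
  proof (intro allI impI)
    fix p q r assume t: "geodesic_triangle ?H p q r"
    then have sp: "set p \<subseteq> C" and sq: "set q \<subseteq> C" and sr: "set r \<subseteq> C"
      by (auto simp: geodesic_triangle_def geoH)
    have "geodesic_triangle G p q r" using t by (auto simp: geodesic_triangle_def geoH)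
    then have th: "thin_triangle G \<delta> p q r" using assms(2) by (auto simp: strongly_hyperbolic_def)
    have "set r \<subseteq> out_ball ?H \<delta> (set p) \<union> in_ball ?H \<delta> (set q)"
      using th sr ob[OF sp] ib[OF sq] unfolding thin_triangle_def by blast
    moreover have "set p \<subseteq> out_ball ?H \<delta> (set r) \<union> in_ball ?H \<delta> (set q)"
      using th sp ob[OF sr] ib[OF sq] unfolding thin_triangle_def by blast
    moreover have "set q \<subseteq> out_ball ?H \<delta> (set p) \<union> in_ball ?H \<delta> (set r)"
      using th sq ob[OF sp] ib[OF sr] unfolding thin_triangle_def by blast
    ultimately show "thin_triangle ?H \<delta> p q r" unfolding thin_triangle_def by blast
  qed
qed

end
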